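(* Let $Y$ and $X_1,\ldots,X_m$ be real-valued square integrable random variables on a common probability space, write $\mathbf{X}=(X_1,\ldots,X_m)$ and fix $k\in\{1,\ldots,m\}$. Then: (a) If $\beta=(\beta_0,\beta_j)_{j\neq k}$ is the minimizer over $\beta'\in\mathbb{R}^m$ of $E[(X_k-\beta'_0-\sum_{j\neq k}\beta'_jX_j)^2]$ and $\tilde X_k=X_k-\beta_0-\sum_{j\neq k}\beta_jX_j$, then $\iota^{lin}_{X_k\mid X_j,\,j\neq k}(Y)=\iota^{lin}_{\tilde X_k}(Y)$. (b) If $\theta=(\theta_0,\theta_1,\ldots,\theta_m)$ is the minimizer over $\theta'\in\mathbb{R}^{m+1}$ of $E[(Y-\theta'_0-\sum_{j=1}^m\theta'_jX_j)^2]$, then $|\theta_k|=\iota^{lin}_{X_k\mid X_j,\,j\neq k}(Y)/\iota^{lin}_{X_k\mid X_j,\,j\neq k}(X_k)$. (c) $\iota_{X_k\mid X_j,\,j\neq k}(Y)\ge \iota^{lin}_{X_k\mid X_j,\,j\neq k}(Y)$ and $\iota_{X_k\mid X_j,\,j\neq k}(X_k)=\iota^{lin}_{X_k\mid X_j,\,j\neq k}(X_k)$. (d) If $X_k$ and $\{X_j: j\neq k\}$ are stochastically independent, then $\iota^{lin}_{X_k\mid X_j,\,j\neq k}(Y)=\iota^{lin}_{X_k}(Y)$. (e) If $E(Y\mid\mathbf{X})=\theta_0+\sum_{j=1}^m\theta_jX_j$ for real constants $\theta_j$, then $\iota_{X_k\mid X_j,\,j\neq k}(Y)=\iota^{lin}_{X_k\mid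 X_j,\,j\neq k}(Y)$.
   Context: Partial mean impact: with $\mathcal{H}_k=\{\delta(\mathbf{X})\in L^2:\ \delta \text{ measurable},\ E[\delta(\mathbf{X})]=0,\ E[\delta^2(\mathbf{X})]=1,\ E[X_j\delta(\mathbf{X})]=0\ \forall j\neq k\}$, set $\iota_{X_k\mid X_j,\,j\neq k}(Z)=\sup_{\delta(\mathbf{X})\in\mathcal{H}_k}E[Z\delta(\mathbf{X})]$ for square integrable $Z$. Partial linear mean impact: with $\mathcal{H}^{lin}_k=\{\delta(\mathbf{X})=\eta_0+\sum_{j=1}^m\eta_jX_j,\ \eta\in\mathbb{R}^{m+1}:\ E[\delta(\mathbf{X})]=0,\ E[\delta^2(\mathbf{X})]=1,\ E[X_j\delta(\mathbf{X})]=0\ \forall j\neq k\}$, set $\iota^{lin}_{X_k\mid X_j,\,j\neq k}(Z)=\sup_{\delta(\mathbf{X})\in\mathcal{H}^{lin}_k}E[Z\delta(\mathbf{X})]$. (Bivariate) linear mean impact of a square integrable random variable $W$ on $Z$: $\iota^{lin}_W(Z)=\sup\{E[Z\delta(W)]:\ \delta(w)=a+bw,\ E[\delta(W)]=0,\ E[\delta^2(W)]=1\}$, which equals $|\operatorname{Cov}(Z,W)|/\operatorname{SD}(W)$. *)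

theory Defs
  imports "HOL-Probability.Probability"
begin

definition sq_int :: "'a measure \<Rightarrow> ('a \<Rightarrow> real) \<Rightarrow> bool" where
  "sq_int M f \<longleftrightarrow> f \<in> borel_measurable M \<and> integrable M (\<lambda>w. (f w)^2)"

definition vecX :: "nat \<Rightarrow> (nat \<Rightarrow> 'a \<Rightarrow> real) \<Rightarrow> 'a \<Rightarrow> (nat \<Rightarrow> real)" where
  "vecX m X = (\<lambda>w. \<lambda>j\<in>{1..m}. X j w)"

definition H_set :: "'a measure \<Rightarrow> nat \<Rightarrow> (nat \<Rightarrow> 'a \<Rightarrow> real) \<Rightarrow> nat \<Rightarrow> ('a \<Rightarrow> real) set" where
  "H_set M m X k = {d. (\<exists>g \<in> borel_measurable (PiM {1..m} (\<lambda>_. borel)). d = (\<lambda>w. g (vecX m X w)))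
      \<and> sq_int M d
      \<and> integral\<^sup>L M d = 0
      \<and> integral\<^sup>L M (\<lambda>w. (d w)^2) = 1
      \<and> (\<forall>j\<in>{1..m}. j \<noteq> k \<longrightarrow> integral\<^sup>L M (\<lambda>w. X j w * d w) = 0)}"

definition H_lin_set :: "'a measure \<Rightarrow> nat \<Rightarrow> (nat \<Rightarrow> 'a \<Rightarrow> real) \<Rightarrow> nat \<Rightarrow> ('a \<Rightarrow> real) set" where
  "H_lin_set M m X k = {d. (\<exists>\<eta> :: nat \<Rightarrow> real. d = (\<lambda>w. \<eta> 0 + (\<Sum>j=1..m. \<eta> j * X j w)))
      \<and> integral\<^sup>L M d = 0
      \<and> integral\<^sup>L M (\<lambda>w. (d w)^2) = 1
      \<and> (\<forall>j\<in>{1..m}. j \<noteq> k \<longrightarrow> integral\<^sup>L M (\<lambda>w. X j w * d w) = 0)}"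

definition partial_impact :: "'a measure \<Rightarrow> nat \<Rightarrow> (nat \<Rightarrow> 'a \<Rightarrow> real) \<Rightarrow> nat \<Rightarrow> ('a \<Rightarrow> real) \<Rightarrow> real" where
  "partial_impact M m X k Z = Sup ((\<lambda>d. integral\<^sup>L M (\<lambda>w. Z w * d w)) ` H_set M m X k)"

definition partial_lin_impact :: "'a measure \<Rightarrow> nat \<Rightarrow> (nat \<Rightarrow> 'a \<Rightarrow> real) \<Rightarrow> nat \<Rightarrow> ('a \<Rightarrow> real) \<Rightarrow> real" where
  "partial_lin_impact M m X k Z = Sup ((\<lambda>d. integral\<^sup>L M (\<lambda>w. Z w * d w)) ` H_lin_set M m X k)"

definition lin_impact :: "'a measure \<Rightarrow> ('a \<Rightarrow> real) \<Rightarrow> ('a \<Rightarrow> real) \<Rightarrow> real" where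
  "lin_impact M W Z = Sup ((\<lambda>(a,b). integral\<^sup>L M (\<lambda>w. Z w * (a + b * W w))) `
      {(a::real, b::real). integral\<^sup>L M (\<lambda>w. a + b * W w) = 0
                         \<and> integral\<^sup>L M (\<lambda>w. (a + b * W w)^2) = 1})"

definition sigX :: "'a measure \<Rightarrow> nat \<Rightarrow> (nat \<Rightarrow> 'a \<Rightarrow> real) \<Rightarrow> 'a measure" where
  "sigX M m X = vimage_algebra (space M) (vecX m X) (PiM {1..m} (\<lambda>_. borel))"

end

theory Submission
  imports Defs
begin

lemma absprod_le: "\<bar>(a::real) * b\<bar> \<le> a^2 + b^2"
proof -
  have "0 \<le> (\<bar>a\<bar> - \<bar>b\<bar>)^2" by simp
  then have "2 * (\<bar>a\<bar> * \<bar>b\<bar>) \<le> \<bar>a\<bar>^2 + \<bar>b\<bar>^2" by (simp add: power2_diff)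
  moreover have "0 \<le> \<bar>a\<bar> * \<bar>b\<bar>" by simp
  moreover have "\<bar>a\<bar>^2 = a^2" "\<bar>b\<bar>^2 = b^2" by simp_all
  ultimately show ?thesis unfolding abs_mult by linarith
qed

lemma sq_int_integrable_prod:
  assumes "sq_int M f" "sq_int M g"
  shows "integrable M (\<lambda>w. f w * g w)"
proof (rule Bochner_Integration.integrable_bound)
  show "integrable M (\<lambda>w. (f w)^2 + (g w)^2)" using assms unfolding sq_int_def by auto
  show "(\<lambda>w. f w * g w) \<in> borel_measurable M" using assms unfolding sq_int_def by auto
  show "AE x in M. norm (f x * g x) \<le> norm ((f x)^2 + (g x)^2)"
    using absprod_le by (auto intro!: AE_I2)
qed

lemma sq_int_const: "prob_space M \<Longrightarrow> sq_int M (\<lambda>w. c)"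
  unfolding sq_int_def by (simp add: prob_space.finite_measure finite_measure.integrable_const)

lemma sq_int_integrable: "prob_space M \<Longrightarrow> sq_int M f \<Longrightarrow> integrable M f"
  using sq_int_integrable_prod[of M f "\<lambda>w. 1"] sq_int_const[of M 1] by simp

lemma sq_int_add: "sq_int M f \<Longrightarrow> sq_int M g \<Longrightarrow> sq_int M (\<lambda>w. f w + g w)"
proof -
  assume a: "sq_int M f" "sq_int M g"
  have i: "integrable M (\<lambda>w. (f w)^2 + 2 * (f w * g w) + (g w)^2)"
    using a sq_int_integrable_prod[OF a] unfolding sq_int_def by auto
  have m: "(\<lambda>w. f w + g w) \<in> borel_measurable M" using a unfolding sq_int_def by auto
  have e: "(\<lambda>w. (f w + g w)^2) = (\<lambda>w. (f w)^2 + 2 * (f w * g w) + (g w)^2)"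
    by (rule ext) (simp add: power2_sum)
  show ?thesis unfolding sq_int_def e using i m by blast
qed

lemma sq_int_cmult: "sq_int M f \<Longrightarrow> sq_int M (\<lambda>w. c * f w)"
  unfolding sq_int_def by (auto simp: power_mult_distrib)

lemma sq_int_uminus: "sq_int M f \<Longrightarrow> sq_int M (\<lambda>w. - f w)"
  unfolding sq_int_def by simp

lemma sq_int_diff: "sq_int M f \<Longrightarrow> sq_int M g \<Longrightarrow> sq_int M (\<lambda>w. f w - g w)"
  using sq_int_add[of M f "\<lambda>w. - g w"] sq_int_uminus[of M g] by simp

lemma sq_int_sum: assumes "prob_space M" "finite J" "(\<And>j. j \<in> J \<Longrightarrow> sq_int M (F j))" shows "sq_int M (\<lambda>w. \<Sum>j\<in>J. F j w)"
  using assms(2,3) proof (induction J rule: finite_induct)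
  case empty then show ?case using sq_int_const[OF assms(1), of 0] by simp
next
  case (insert a J) then show ?case using sq_int_add[of M "F a" "\<lambda>w. \<Sum>j\<in>J. F j w"] by simp
qed

definition aff :: "(nat \<Rightarrow> 'a \<Rightarrow> real) \<Rightarrow> (nat \<Rightarrow> real) \<Rightarrow> nat set \<Rightarrow> 'a \<Rightarrow> real" where
  "aff X c J w = c 0 + (\<Sum>j\<in>J. c j * X j w)"

lemma sq_int_aff:
  assumes P: "prob_space M" and J: "finite J" and S: "\<And>j. j \<in> J \<Longrightarrow> sq_int M (X j)"
  shows "sq_int M (aff X c J)"
proof -
  have "sq_int M (\<lambda>w. \<Sum>j\<in>J. c j * X j w)"
    using sq_int_sum[OF P J, of "\<lambda>j w. c j * X j w"] S sq_int_cmult by blast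
  then have "sq_int M (\<lambda>w. c 0 + (\<Sum>j\<in>J. c j * X j w))"
    using sq_int_add[OF sq_int_const[OF P, of "c 0"]] by blast
  then show ?thesis unfolding aff_def[abs_def] .
qed

lemma int_aff:
  assumes P: "prob_space M" and J: "finite J" and SX: "\<And>j. j \<in> J \<Longrightarrow> sq_int M (X j)" and Z: "sq_int M Z"
  shows "(\<integral>w. Z w * aff X c J w \<partial>M) = c 0 * (\<integral>w. Z w \<partial>M) + (\<Sum>j\<in>J. c j * (\<integral>w. Z w * X j w \<partial>M))"
proof -
  have i: "\<And>j. j \<in> J \<Longrightarrow> integrable M (\<lambda>w. c j * (Z w * X j w))"
    using sq_int_integrable_prod[OF Z SX] by auto
  have "(\<integral>w. Z w * aff X c J w \<partial>M) = (\<integral>w. c 0 * Z w + (\<Sum>j\<in>J. c j * (Z w * X j w)) \<partial>M)"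
    unfolding aff_def by (simp add: algebra_simps sum_distrib_left)
  also have "\<dots> = c 0 * (\<integral>w. Z w \<partial>M) + (\<Sum>j\<in>J. c j * (\<integral>w. Z w * X j w \<partial>M))"
    using i sq_int_integrable[OF P Z]
    by (simp add: Bochner_Integration.integral_add Bochner_Integration.integral_sum Bochner_Integration.integrable_sum del: integral_mult_right_zero integral_mult_right) (intro sum.cong refl integral_mult_right_zero)
  finally show ?thesis .
qed

lemma int_zero_sq:
  assumes "sq_int M s" "(\<integral>w. (s w)^2 \<partial>M) = 0" "g \<in> borel_measurable M"
  shows "(\<integral>w. s w * g w \<partial>M) = 0"
proof -
  have "AE w in M. (s w)^2 = 0"
    using assms integral_nonneg_eq_0_iff_AE[of M "\<lambda>w. (s w)^2"] unfolding sq_int_def by auto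
  then have "AE w in M. s w * g w = 0" by auto
  then have "(\<integral>w. s w * g w \<partial>M) = (\<integral>w. 0 \<partial>M)"
    using assms unfolding sq_int_def by (intro integral_cong_AE) auto
  then show ?thesis by simp
qed

definition res :: "(nat \<Rightarrow> 'a \<Rightarrow> real) \<Rightarrow> ('a \<Rightarrow> real) \<Rightarrow> (nat \<Rightarrow> real) \<Rightarrow> nat set \<Rightarrow> 'a \<Rightarrow> real" where
  "res X f c J w = f w - c 0 - (\<Sum>j\<in>J. c j * X j w)"

lemma res_aff: "res X f c J w = f w - aff X c J w"
  unfolding res_def aff_def by simp

lemma sq_int_res: "prob_space M \<Longrightarrow> finite J \<Longrightarrow> (\<And>j. j \<in> J \<Longrightarrow> sq_int M (X j)) \<Longrightarrow> sq_int M f \<Longrightarrow> sq_int M (res X f c J)"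
proof -
  assume a: "prob_space M" "finite J" "(\<And>j. j \<in> J \<Longrightarrow> sq_int M (X j))" "sq_int M f"
  have e: "res X f c J = (\<lambda>w. f w - aff X c J w)" by (rule ext) (rule res_aff)
  show ?thesis unfolding e by (rule sq_int_diff[OF a(4) sq_int_aff[OF a(1,2,3)]])
qed

lemma int_res:
  assumes P: "prob_space M" and J: "finite J" and SX: "\<And>j. j \<in> J \<Longrightarrow> sq_int M (X j)" and Z: "sq_int M Z"
    and f: "sq_int M f"
  shows "(\<integral>w. Z w * res X f c J w \<partial>M) = (\<integral>w. Z w * f w \<partial>M) - c 0 * (\<integral>w. Z w \<partial>M) - (\<Sum>j\<in>J. c j * (\<integral>w. Z w * X j w \<partial>M))"
proof -
  have "(\<integral>w. Z w * res X f c J w \<partial>M) = (\<integral>w. Z w * f w - Z w * aff X c J w \<partial>M)"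
    unfolding res_aff by (simp add: algebra_simps)
  also have "\<dots> = (\<integral>w. Z w * f w \<partial>M) - (\<integral>w. Z w * aff X c J w \<partial>M)"
    using sq_int_integrable_prod[OF Z f] sq_int_integrable_prod[OF Z sq_int_aff[OF P J SX]]
    by (rule Bochner_Integration.integral_diff)
  finally show ?thesis using int_aff[OF P J SX Z] by simp
qed

lemma int_lin2:
  assumes "sq_int M A" "sq_int M B" "sq_int M C"
  shows "(\<integral>w. A w * (B w - t * C w) \<partial>M) = (\<integral>w. A w * B w \<partial>M) - t * (\<integral>w. A w * C w \<partial>M)"
proof -
  have "(\<integral>w. A w * (B w - t * C w) \<partial>M) = (\<integral>w. A w * B w - t * (A w * C w) \<partial>M)"
    by (simp add: algebra_simps)
  also have "\<dots> = (\<integral>w. A w * B w \<partial>M) - t * (\<integral>w. A w * C w \<partial>M)"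
    using sq_int_integrable_prod[OF assms(1,2)] sq_int_integrable_prod[OF assms(1,3)] by simp
  finally show ?thesis .
qed

lemma int_lin1:
  assumes "prob_space M" "sq_int M B" "sq_int M C"
  shows "(\<integral>w. (B w - t * C w) \<partial>M) = (\<integral>w. B w \<partial>M) - t * (\<integral>w. C w \<partial>M)"
  using int_lin2[OF sq_int_const[OF assms(1), of 1] assms(2,3), of t] by simp

lemma proj_exists:
  assumes P: "prob_space M" and J: "finite J" "0 \<notin> J" and SX: "\<And>j. j \<in> J \<Longrightarrow> sq_int M (X j)"
    and f: "sq_int M f"
  shows "\<exists>c. (\<integral>w. res X f c J w \<partial>M) = 0 \<and> (\<forall>j\<in>J. (\<integral>w. X j w * res X f c J w \<partial>M) = 0)"
  using J SX f
proof (induction J arbitrary: f rule: finite_induct)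
  case empty
  have "(\<integral>w. res X f (\<lambda>_. \<integral>w. f w \<partial>M) {} w \<partial>M) = 0"
    unfolding res_def using sq_int_integrable[OF P empty(3)] prob_space.prob_space[OF P]
    by (simp add: prob_space.finite_measure[OF P] finite_measure.integrable_const)
  then show ?case by blast
next
  case (insert a J)
  have SXJ: "\<And>j. j \<in> J \<Longrightarrow> sq_int M (X j)" and SXa: "sq_int M (X a)" using insert by auto
  have a0: "a \<noteq> 0" "0 \<notin> J" using insert by auto
  obtain c where c: "(\<integral>w. res X f c J w \<partial>M) = 0" "\<forall>j\<in>J. (\<integral>w. X j w * res X f c J w \<partial>M) = 0"
    using insert.IH[OF a0(2) SXJ insert.prems(3)] by blast
  obtain d where d: "(\<integral>w. res X (X a) d J w \<partial>M) = 0" "\<forall>j\<in>J. (\<integral>w. X j w * res X (X a) d J w \<partial>M) = 0"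
    using insert.IH[OF a0(2) SXJ SXa] by blast
  define rf where "rf = res X f c J"
  define ra where "ra = res X (X a) d J"
  have Srf: "sq_int M rf" unfolding rf_def using sq_int_res[OF P insert(1) SXJ insert.prems(3)] .
  have Sra: "sq_int M ra" unfolding ra_def using sq_int_res[OF P insert(1) SXJ SXa] .
  define t where "t = (\<integral>w. ra w * rf w \<partial>M) / (\<integral>w. ra w * ra w \<partial>M)"
  define c' where "c' = (\<lambda>j. if j = a then t else c j - t * d j)"
  have eq: "res X f c' (insert a J) = (\<lambda>w. rf w - t * ra w)"
  proof
    fix w
    have "(\<Sum>j\<in>J. c' j * X j w) = (\<Sum>j\<in>J. c j * X j w) - t * (\<Sum>j\<in>J. d j * X j w)"
      unfolding sum_distrib_left sum_subtractf[symmetric] c'_def using insert(2)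
      by (intro sum.cong) (auto simp: algebra_simps)
    then show "res X f c' (insert a J) w = rf w - t * ra w"
      unfolding rf_def ra_def res_def using insert(1,2) a0 by (simp add: c'_def algebra_simps)
  qed
  have o1: "(\<integral>w. rf w - t * ra w \<partial>M) = 0"
    using int_lin1[OF P Srf Sra] c(1) d(1) unfolding rf_def ra_def by simp
  have o2: "\<forall>j\<in>J. (\<integral>w. X j w * (rf w - t * ra w) \<partial>M) = 0"
    using int_lin2[OF SXJ Srf Sra] c(2) d(2) unfolding rf_def ra_def by simp
  have Sg: "sq_int M (\<lambda>w. rf w - t * ra w)" using sq_int_diff[OF Srf sq_int_cmult[OF Sra]] .
  have rar: "(\<integral>w. ra w * (rf w - t * ra w) \<partial>M) = 0"
  proof (cases "(\<integral>w. ra w * ra w \<partial>M) = 0")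
    case True
    then have "t = 0" unfolding t_def by simp
    moreover have "(\<integral>w. ra w * rf w \<partial>M) = 0"
      using int_zero_sq[OF Sra, of rf] True Srf unfolding sq_int_def by (simp add: power2_eq_square)
    ultimately show ?thesis by simp
  next
    case False
    then show ?thesis using int_lin2[OF Sra Srf Sra, of t] unfolding t_def by simp
  qed
  have e1: "(\<integral>w. (rf w - t * ra w) * res X (X a) d J w \<partial>M) = (\<integral>w. (rf w - t * ra w) * X a w \<partial>M) - d 0 * (\<integral>w. rf w - t * ra w \<partial>M)
     - (\<Sum>j\<in>J. d j * (\<integral>w. (rf w - t * ra w) * X j w \<partial>M))"
    by (rule int_res[OF P insert(1) SXJ Sg SXa])
  have c1: "\<And>j. (\<lambda>w. (rf w - t * ra w) * X j w) = (\<lambda>w. X j w * (rf w - t * ra w))"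
    by (rule ext) (rule mult.commute)
  have s0: "(\<Sum>j\<in>J. d j * (\<integral>w. (rf w - t * ra w) * X j w \<partial>M)) = 0"
    using o2 unfolding c1 by simp
  have c2: "(\<lambda>w. (rf w - t * ra w) * res X (X a) d J w) = (\<lambda>w. ra w * (rf w - t * ra w))"
    unfolding ra_def by (rule ext) (rule mult.commute)
  have o3: "(\<integral>w. X a w * (rf w - t * ra w) \<partial>M) = 0"
  proof -
    have "(\<integral>w. (rf w - t * ra w) * X a w \<partial>M) = 0"
      using e1 unfolding s0 o1 c2 rar by simp
    then show ?thesis unfolding c1 .
  qed
  have "(\<integral>w. res X f c' (insert a J) w \<partial>M) = 0" unfolding eq using o1 .
  moreover have "\<forall>j\<in>insert a J. (\<integral>w. X j w * res X f c' (insert a J) w \<partial>M) = 0"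
  proof
    fix j assume "j \<in> insert a J"
    then show "(\<integral>w. X j w * res X f c' (insert a J) w \<partial>M) = 0"
      unfolding eq using o2 o3 by blast
  qed
  ultimately show ?case by blast
qed

lemma int_comm: "(\<integral>w. f w * g w \<partial>M) = (\<integral>w. g w * (f w::real) \<partial>M)"
  by (simp add: mult.commute)

lemma int_comm0: "(\<integral>w. g w * f w \<partial>M) = 0 \<Longrightarrow> (\<integral>w. f w * g w \<partial>M) = (0::real)"
  by (subst int_comm) assumption

lemma int_lin3:
  assumes "sq_int M A" "sq_int M B" "sq_int M C"
  shows "(\<integral>w. A w * (t * B w + C w) \<partial>M) = t * (\<integral>w. A w * B w \<partial>M) + (\<integral>w. A w * C w \<partial>M)"
proof -
  have "(\<integral>w. A w * (t * B w + C w) \<partial>M) = (\<integral>w. t * (A w * B w) + A w * C w \<partial>M)"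
    by (simp add: algebra_simps)
  also have "\<dots> = t * (\<integral>w. A w * B w \<partial>M) + (\<integral>w. A w * C w \<partial>M)"
    using sq_int_integrable_prod[OF assms(1,2)] sq_int_integrable_prod[OF assms(1,3)] by simp
  finally show ?thesis .
qed

lemma real_foc: assumes "(b::real) \<ge> 0" "0 \<le> - 2 * (a / (b + 1)) * a + (a / (b + 1))^2 * b"
  shows "a = 0"
proof -
  define s where "s = a / (b + 1)"
  have p: "b + 1 > 0" using assms by simp
  have sa: "s * (b + 1) = a" unfolding s_def using p by simp
  have "0 \<le> (- 2 * s * a + s^2 * b) * (b + 1)^2"
    using assms(2) unfolding s_def by simp
  also have "(- 2 * s * a + s^2 * b) * (b + 1)^2 = - 2 * a * (s * (b + 1)) * (b + 1) + (s * (b + 1))^2 * b"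
    by (simp add: power2_eq_square algebra_simps)
  also have "\<dots> = - (a^2 * (b + 2))"
    unfolding sa by (simp add: power2_eq_square algebra_simps)
  finally have "a^2 * (b + 2) \<le> 0" by simp
  moreover have "a^2 * (b + 2) \<ge> 0" using assms by simp
  ultimately have "a^2 * (b + 2) = 0" by linarith
  then show ?thesis using assms by simp
qed

lemma foc_gen:
  assumes r: "sq_int M r" and g: "sq_int M g"
    and min: "\<And>s. (\<integral>w. (r w)^2 \<partial>M) \<le> (\<integral>w. (r w - s * g w)^2 \<partial>M)"
  shows "(\<integral>w. g w * r w \<partial>M) = 0"
proof -
  define a where "a = (\<integral>w. g w * r w \<partial>M)"
  define b where "b = (\<integral>w. (g w)^2 \<partial>M)"
  have b0: "b \<ge> 0" unfolding b_def by simp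
  have exp: "\<And>s. (\<integral>w. (r w - s * g w)^2 \<partial>M) = (\<integral>w. (r w)^2 \<partial>M) - 2 * s * a + s^2 * b"
  proof -
    fix s
    have "(\<lambda>w. (r w - s * g w)^2) = (\<lambda>w. ((r w)^2 - (2 * s) * (g w * r w)) + s^2 * (g w)^2)"
      by (rule ext) (simp add: power2_diff power_mult_distrib algebra_simps)
    then have "(\<integral>w. (r w - s * g w)^2 \<partial>M) = (\<integral>w. ((r w)^2 - (2 * s) * (g w * r w)) + s^2 * (g w)^2 \<partial>M)"
      by simp
    also have "\<dots> = (\<integral>w. (r w)^2 - (2 * s) * (g w * r w) \<partial>M) + (\<integral>w. s^2 * (g w)^2 \<partial>M)"
      using r g sq_int_integrable_prod[OF g r] unfolding sq_int_def
      by (intro Bochner_Integration.integral_add) auto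
    also have "(\<integral>w. (r w)^2 - (2 * s) * (g w * r w) \<partial>M) = (\<integral>w. (r w)^2 \<partial>M) - (\<integral>w. (2 * s) * (g w * r w) \<partial>M)"
      using r g sq_int_integrable_prod[OF g r] unfolding sq_int_def
      by (intro Bochner_Integration.integral_diff) auto
    finally show "(\<integral>w. (r w - s * g w)^2 \<partial>M) = (\<integral>w. (r w)^2 \<partial>M) - 2 * s * a + s^2 * b"
      unfolding a_def b_def by simp
  qed
  have "0 \<le> - 2 * (a / (b + 1)) * a + (a / (b + 1))^2 * b"
    using min[of "a / (b + 1)"] unfolding exp by simp
  then have "a = 0" using real_foc b0 by blast
  then show ?thesis unfolding a_def .
qed

lemma sum_upd:
  assumes "finite J" "j \<in> J"
  shows "(\<Sum>l\<in>J. (c(j := v)) l * X l w) = (\<Sum>l\<in>J. c l * X l w) + (v - c j) * (X j w :: real)"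
proof -
  have e1: "(\<Sum>l\<in>J. (c(j := v)) l * X l w) = v * X j w + (\<Sum>l\<in>J - {j}. (c(j := v)) l * X l w)"
    using sum.remove[OF assms, of "\<lambda>l. (c(j := v)) l * X l w"] by simp
  have e2: "(\<Sum>l\<in>J - {j}. (c(j := v)) l * X l w) = (\<Sum>l\<in>J - {j}. c l * X l w)"
    by (rule sum.cong) auto
  have e3: "(\<Sum>l\<in>J. c l * X l w) = c j * X j w + (\<Sum>l\<in>J - {j}. c l * X l w)"
    using sum.remove[OF assms] by simp
  show ?thesis unfolding e1 e2 e3 by (simp add: left_diff_distrib)
qed

lemma foc:
  assumes P: "prob_space M" and J: "finite J" "0 \<notin> J" and SX: "\<And>j. j \<in> J \<Longrightarrow> sq_int M (X j)"
    and f: "sq_int M f"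
    and min: "\<forall>c'. (\<integral>w. (res X f c J w)^2 \<partial>M) \<le> (\<integral>w. (res X f c' J w)^2 \<partial>M)"
  shows "(\<integral>w. res X f c J w \<partial>M) = 0 \<and> (\<forall>j\<in>J. (\<integral>w. X j w * res X f c J w \<partial>M) = 0)"
proof
  have S: "sq_int M (res X f c J)" using sq_int_res[OF P J(1) SX f] .
  have "(\<integral>w. 1 * res X f c J w \<partial>M) = 0"
  proof (rule foc_gen[OF S sq_int_const[OF P]])
    fix s
    have "res X f (c(0 := c 0 + s)) J = (\<lambda>w. res X f c J w - s * 1)"
    proof
      fix w
      have "(\<Sum>l\<in>J. (c(0 := c 0 + s)) l * X l w) = (\<Sum>l\<in>J. c l * X l w)"
        using J(2) by (intro sum.cong) auto
      then show "res X f (c(0 := c 0 + s)) J w = res X f c J w - s * 1"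
        unfolding res_def by simp
    qed
    then show "(\<integral>w. (res X f c J w)^2 \<partial>M) \<le> (\<integral>w. (res X f c J w - s * 1)^2 \<partial>M)"
      using min by metis
  qed
  then show "(\<integral>w. res X f c J w \<partial>M) = 0" by simp
  show "\<forall>j\<in>J. (\<integral>w. X j w * res X f c J w \<partial>M) = 0"
  proof
    fix j assume j: "j \<in> J"
    show "(\<integral>w. X j w * res X f c J w \<partial>M) = 0"
    proof (rule foc_gen[OF S SX[OF j]])
      fix s
      have "res X f (c(j := c j + s)) J = (\<lambda>w. res X f c J w - s * X j w)"
      proof
        fix w
        have j0: "j \<noteq> 0" using j J(2) by metis
        show "res X f (c(j := c j + s)) J w = res X f c J w - s * X j w"
          unfolding res_def using sum_upd[OF J(1) j, of c "c j + s" X w] j0 by simp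
      qed
      then show "(\<integral>w. (res X f c J w)^2 \<partial>M) \<le> (\<integral>w. (res X f c J w - s * X j w)^2 \<partial>M)"
        using min by metis
    qed
  qed
qed

lemma amgm_int:
  assumes a: "sq_int M a" and b: "sq_int M b" and q: "q > 0"
  shows "(\<integral>w. a w * b w \<partial>M) \<le> ((\<integral>w. (a w)^2 \<partial>M) / q + q * (\<integral>w. (b w)^2 \<partial>M)) / 2"
proof -
  have pw: "\<And>w. a w * b w \<le> ((a w)^2 / q + q * (b w)^2) / 2"
  proof -
    fix w
    have "0 \<le> q * (a w / q - b w)^2" using q by simp
    also have "q * (a w / q - b w)^2 = (a w)^2 / q + q * (b w)^2 - 2 * (a w * b w)"
      using q by (simp add: power2_diff field_simps power2_eq_square)
    finally show "a w * b w \<le> ((a w)^2 / q + q * (b w)^2) / 2" by simp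
  qed
  have "(\<integral>w. a w * b w \<partial>M) \<le> (\<integral>w. ((a w)^2 / q + q * (b w)^2) / 2 \<partial>M)"
    using a b sq_int_integrable_prod[OF a b] pw unfolding sq_int_def
    by (intro integral_mono) auto
  also have "\<dots> = ((\<integral>w. (a w)^2 \<partial>M) / q + q * (\<integral>w. (b w)^2 \<partial>M)) / 2"
    using a b unfolding sq_int_def by simp
  finally show ?thesis .
qed

lemma abs_from_sq: assumes "b^2 * V = (1::real)" "V > 0" shows "\<bar>b\<bar> = 1 / sqrt V"
proof -
  have "sqrt (b^2 * V) = 1" using assms by simp
  then have "\<bar>b\<bar> * sqrt V = 1" by (simp add: real_sqrt_mult)
  then show ?thesis using assms(2) by (simp add: field_simps)
qed

lemma int_scal: "(\<integral>w. A w * (t * B w) \<partial>M) = t * (\<integral>w. A w * (B w::real) \<partial>M)"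
proof -
  have "(\<lambda>w. A w * (t * B w)) = (\<lambda>w. t * (A w * B w))" by (rule ext) simp
  then show ?thesis by simp
qed

lemma int_scal_sq: "(\<integral>w. (t * B w)^2 \<partial>M) = t^2 * (\<integral>w. (B w::real)^2 \<partial>M)"
  by (simp add: power_mult_distrib)

lemma res_as_aff:
  assumes K: "k \<in> {1..m}"
  shows "t * (if (0::nat) = 0 then - \<beta> 0 else 0) + (\<Sum>j=1..m. (t * (if j = 0 then - \<beta> 0 else if j = k then 1 else - \<beta> j)) * X j w)
     = t * res X (X k) \<beta> ({1..m} - {k}) w"
proof -
  let ?e = "\<lambda>j. (t * (if j = 0 then - \<beta> 0 else if j = k then 1 else - \<beta> j)) * X j w"
  have "(\<Sum>j=1..m. ?e j) = ?e k + (\<Sum>j\<in>{1..m} - {k}. ?e j)"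
    using sum.remove[of "{1..m}" k ?e] K by simp
  also have "(\<Sum>j\<in>{1..m} - {k}. ?e j) = (\<Sum>j\<in>{1..m} - {k}. - t * (\<beta> j * X j w))"
    by (rule sum.cong) auto
  also have "\<dots> = - t * (\<Sum>j\<in>{1..m} - {k}. \<beta> j * X j w)"
    by (simp add: sum_distrib_left)
  finally show ?thesis using K unfolding res_def by (simp add: algebra_simps)
qed

lemma resid_pos:
  assumes P: "prob_space M" and SX: "\<forall>j\<in>{1..m}. sq_int M (X j)" and K: "k \<in> {1..m}"
    and nondeg: "\<forall>\<eta> :: nat \<Rightarrow> real.
        (AE w in M. \<eta> 0 + (\<Sum>j=1..m. \<eta> j * X j w) = 0) \<longrightarrow> (\<forall>j\<in>{0..m}. \<eta> j = 0)"
  shows "(\<integral>w. (res X (X k) \<beta> ({1..m} - {k}) w)^2 \<partial>M) > 0"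
proof -
  let ?J = "{1..m} - {k}"
  let ?r = "res X (X k) \<beta> ?J"
  have S: "sq_int M ?r" by (rule sq_int_res[OF P]) (use SX K in auto)
  define \<eta> where "\<eta> = (\<lambda>j. (1::real) * (if j = 0 then - \<beta> 0 else if j = k then 1 else - \<beta> j))"
  have eq: "\<And>w. \<eta> 0 + (\<Sum>j=1..m. \<eta> j * X j w) = ?r w"
    using res_as_aff[OF K, of 1 \<beta> X] unfolding \<eta>_def by simp
  have ge: "(\<integral>w. (?r w)^2 \<partial>M) \<ge> 0" by simp
  show ?thesis
  proof (rule ccontr)
    assume "\<not> ?thesis"
    then have z: "(\<integral>w. (?r w)^2 \<partial>M) = 0" using ge by linarith
    have "AE w in M. (?r w)^2 = 0"
      using z S integral_nonneg_eq_0_iff_AE[of M "\<lambda>w. (?r w)^2"] unfolding sq_int_def by auto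
    then have "AE w in M. \<eta> 0 + (\<Sum>j=1..m. \<eta> j * X j w) = 0" unfolding eq by simp
    then have "\<eta> k = 0" using nondeg K by auto
    moreover have "\<eta> k = 1" using K unfolding \<eta>_def by auto
    ultimately show False by simp
  qed
qed

lemma PL:
  assumes P: "prob_space M" and SX: "\<forall>j\<in>{1..m}. sq_int M (X j)" and K: "k \<in> {1..m}"
    and nondeg: "\<forall>\<eta> :: nat \<Rightarrow> real.
        (AE w in M. \<eta> 0 + (\<Sum>j=1..m. \<eta> j * X j w) = 0) \<longrightarrow> (\<forall>j\<in>{0..m}. \<eta> j = 0)"
    and o1: "(\<integral>w. res X (X k) \<beta> ({1..m} - {k}) w \<partial>M) = 0"
    and o2: "\<forall>j\<in>{1..m} - {k}. (\<integral>w. X j w * res X (X k) \<beta> ({1..m} - {k}) w \<partial>M) = 0"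
    and Z: "sq_int M Z"
  shows "partial_lin_impact M m X k Z = \<bar>\<integral>w. Z w * res X (X k) \<beta> ({1..m} - {k}) w \<partial>M\<bar>
            / sqrt (\<integral>w. (res X (X k) \<beta> ({1..m} - {k}) w)^2 \<partial>M)"
proof -
  define J where "J = {1..m} - {k}"
  define r where "r = res X (X k) \<beta> J"
  define V where "V = (\<integral>w. (r w)^2 \<partial>M)"
  define v where "v = sqrt V"
  define A where "A = (\<integral>w. Z w * r w \<partial>M)"
  have J: "finite J" "0 \<notin> J" unfolding J_def by auto
  have SXJ: "\<And>j. j \<in> J \<Longrightarrow> sq_int M (X j)" using SX unfolding J_def by auto
  have SXk: "sq_int M (X k)" using SX K by auto
  have Sr: "sq_int M r" unfolding r_def by (rule sq_int_res[OF P J(1) SXJ SXk])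
  have Vp: "V > 0" unfolding V_def r_def J_def using resid_pos[OF P SX K nondeg] .
  have vp: "v > 0" unfolding v_def using Vp by simp
  have vV: "v^2 = V" unfolding v_def using Vp by simp
  have o1': "(\<integral>w. r w \<partial>M) = 0" using o1 unfolding r_def J_def .
  have o2': "\<And>j. j \<in> J \<Longrightarrow> (\<integral>w. X j w * r w \<partial>M) = 0" using o2 unfolding r_def J_def by auto
  define \<sigma> where "\<sigma> = (if A \<ge> 0 then 1 else (-1::real))"
  define t where "t = \<sigma> / v"
  have \<sigma>2: "\<sigma>^2 = 1" unfolding \<sigma>_def by simp
  have tA: "t * A = \<bar>A\<bar> / v" unfolding t_def \<sigma>_def by auto
  define D where "D = (\<lambda>d. integral\<^sup>L M (\<lambda>w. Z w * d w)) ` H_lin_set M m X k"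
  have mem: "(\<lambda>w. t * r w) \<in> H_lin_set M m X k"
  proof -
    define \<eta> where "\<eta> = (\<lambda>j. t * (if j = 0 then - \<beta> 0 else if j = k then 1 else - \<beta> j))"
    have "(\<lambda>w. t * r w) = (\<lambda>w. \<eta> 0 + (\<Sum>j=1..m. \<eta> j * X j w))"
      using res_as_aff[OF K, of t \<beta> X] unfolding \<eta>_def r_def J_def by simp
    moreover have "(\<integral>w. t * r w \<partial>M) = 0" using o1' by simp
    moreover have "(\<integral>w. (t * r w)^2 \<partial>M) = 1"
      unfolding int_scal_sq V_def[symmetric] t_def using \<sigma>2 vV vp Vp by (simp add: power_divide)
    moreover have "\<forall>j\<in>{1..m}. j \<noteq> k \<longrightarrow> (\<integral>w. X j w * (t * r w) \<partial>M) = 0"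
      using o2' unfolding int_scal J_def by auto
    ultimately show ?thesis unfolding H_lin_set_def by blast
  qed
  have val: "(\<integral>w. Z w * (t * r w) \<partial>M) = \<bar>A\<bar> / v" unfolding int_scal A_def[symmetric] tA ..
  have ub: "\<And>d. d \<in> H_lin_set M m X k \<Longrightarrow> (\<integral>w. Z w * d w \<partial>M) \<le> \<bar>A\<bar> / v"
  proof -
    fix d assume d: "d \<in> H_lin_set M m X k"
    then obtain \<eta> where deq: "d = (\<lambda>w. \<eta> 0 + (\<Sum>j=1..m. \<eta> j * X j w))"
      and d1: "(\<integral>w. d w \<partial>M) = 0" and d2: "(\<integral>w. (d w)^2 \<partial>M) = 1"
      and d3: "\<forall>j\<in>{1..m}. j \<noteq> k \<longrightarrow> (\<integral>w. X j w * d w \<partial>M) = 0"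
      unfolding H_lin_set_def by blast
    have Sd: "sq_int M d" unfolding deq using sq_int_aff[OF P _ , of "{1..m}" X \<eta>] SX
      unfolding aff_def[abs_def] by auto
    define \<gamma> where "\<gamma> = (\<lambda>j. if j = 0 then \<eta> 0 + \<eta> k * \<beta> 0 else \<eta> j + \<eta> k * \<beta> j)"
    define s where "s = aff X \<gamma> J"
    have Ss: "sq_int M s" unfolding s_def by (rule sq_int_aff[OF P J(1) SXJ])
    have pw: "\<And>w. d w = \<eta> k * r w + s w"
    proof -
      fix w
      have "(\<Sum>j=1..m. \<eta> j * X j w) = \<eta> k * X k w + (\<Sum>j\<in>J. \<eta> j * X j w)"
        using sum.remove[of "{1..m}" k "\<lambda>j. \<eta> j * X j w"] K unfolding J_def by simp
      moreover have "(\<Sum>j\<in>J. \<gamma> j * X j w) = (\<Sum>j\<in>J. \<eta> j * X j w) + \<eta> k * (\<Sum>j\<in>J. \<beta> j * X j w)"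
        unfolding sum_distrib_left sum.distrib[symmetric] \<gamma>_def using J(2)
        by (intro sum.cong) (auto simp: algebra_simps)
      ultimately show "d w = \<eta> k * r w + s w"
        unfolding deq r_def s_def res_def aff_def by (simp add: \<gamma>_def algebra_simps)
    qed
    have pw2: "\<And>w. s w = d w - \<eta> k * r w" using pw by simp
    have ds: "(\<integral>w. d w * s w \<partial>M) = 0"
    proof -
      have "(\<integral>w. d w * s w \<partial>M) = \<gamma> 0 * (\<integral>w. d w \<partial>M) + (\<Sum>j\<in>J. \<gamma> j * (\<integral>w. d w * X j w \<partial>M))"
        unfolding s_def by (rule int_aff[OF P J(1) SXJ Sd])
      moreover have "\<And>j. j \<in> J \<Longrightarrow> (\<integral>w. d w * X j w \<partial>M) = 0"
        using d3 unfolding J_def by (auto simp: int_comm[where f=d])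
      ultimately show ?thesis using d1 by simp
    qed
    have rs: "(\<integral>w. r w * s w \<partial>M) = 0"
    proof -
      have "(\<integral>w. r w * s w \<partial>M) = \<gamma> 0 * (\<integral>w. r w \<partial>M) + (\<Sum>j\<in>J. \<gamma> j * (\<integral>w. r w * X j w \<partial>M))"
        unfolding s_def by (rule int_aff[OF P J(1) SXJ Sr])
      moreover have "\<And>j. j \<in> J \<Longrightarrow> (\<integral>w. r w * X j w \<partial>M) = 0"
        using o2' by (auto simp: int_comm[where f=r])
      ultimately show ?thesis using o1' by simp
    qed
    have ss: "(\<integral>w. (s w)^2 \<partial>M) = 0"
    proof -
      have "(\<integral>w. (s w)^2 \<partial>M) = (\<integral>w. s w * (d w - \<eta> k * r w) \<partial>M)"
        by (subst pw2[symmetric]) (simp add: power2_eq_square)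
      also have "\<dots> = (\<integral>w. s w * d w \<partial>M) - \<eta> k * (\<integral>w. s w * r w \<partial>M)"
        by (rule int_lin2[OF Ss Sd Sr])
      also have "\<dots> = 0" using ds rs by (simp add: int_comm[where f=s])
      finally show ?thesis .
    qed
    have Zs: "(\<integral>w. Z w * s w \<partial>M) = 0"
      using int_zero_sq[OF Ss ss, of Z] Z unfolding sq_int_def by (simp add: int_comm[where f=s])
    have ds0: "(\<integral>w. d w * s w \<partial>M) = 0" using ds .
    have "(\<integral>w. Z w * d w \<partial>M) = (\<integral>w. Z w * (\<eta> k * r w + s w) \<partial>M)" unfolding pw[symmetric] ..
    also have "\<dots> = \<eta> k * A" unfolding int_lin3[OF Z Sr Ss] Zs A_def by simp
    finally have Zd: "(\<integral>w. Z w * d w \<partial>M) = \<eta> k * A" .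
    have dr: "(\<integral>w. d w * r w \<partial>M) = \<eta> k * V"
    proof -
      have "(\<integral>w. d w * r w \<partial>M) = (\<integral>w. r w * (\<eta> k * r w + s w) \<partial>M)"
        unfolding pw[symmetric] by (simp add: int_comm[where f=d])
      also have "\<dots> = \<eta> k * V" unfolding int_lin3[OF Sr Sr Ss] rs V_def by (simp add: power2_eq_square)
      finally show ?thesis .
    qed
    have "1 = (\<integral>w. d w * (\<eta> k * r w + s w) \<partial>M)" unfolding pw[symmetric] d2[symmetric]
      by (simp add: power2_eq_square)
    also have "\<dots> = \<eta> k * (\<eta> k * V)" unfolding int_lin3[OF Sd Sr Ss] ds dr by simp
    finally have "(\<eta> k)^2 * V = 1" by (simp add: power2_eq_square)
    then have ak: "\<bar>\<eta> k\<bar> = 1 / v" unfolding v_def using abs_from_sq Vp by blast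
    have "\<eta> k * A \<le> \<bar>\<eta> k\<bar> * \<bar>A\<bar>" unfolding abs_mult[symmetric] by (rule abs_ge_self)
    then show "(\<integral>w. Z w * d w \<partial>M) \<le> \<bar>A\<bar> / v" unfolding Zd ak by simp
  qed
  have "Sup D = \<bar>A\<bar> / v"
  proof (rule cSup_eq_maximum)
    show "\<bar>A\<bar> / v \<in> D" unfolding D_def by (rule image_eqI[where x="\<lambda>w. t * r w"]) (use val mem in auto)
    show "\<And>x. x \<in> D \<Longrightarrow> x \<le> \<bar>A\<bar> / v" unfolding D_def using ub by blast
  qed
  then show ?thesis unfolding partial_lin_impact_def D_def A_def v_def V_def r_def J_def .
qed

lemma LI:
  assumes P: "prob_space M" and W: "sq_int M W" and Z: "sq_int M Z"
    and Vp: "(\<integral>w. (W w - (\<integral>w. W w \<partial>M))^2 \<partial>M) > 0"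
  shows "lin_impact M W Z = \<bar>\<integral>w. Z w * (W w - (\<integral>w. W w \<partial>M)) \<partial>M\<bar>
            / sqrt (\<integral>w. (W w - (\<integral>w. W w \<partial>M))^2 \<partial>M)"
proof -
  define \<mu> where "\<mu> = (\<integral>w. W w \<partial>M)"
  define c where "c = (\<lambda>w. W w - \<mu>)"
  define V where "V = (\<integral>w. (c w)^2 \<partial>M)"
  define v where "v = sqrt V"
  define A where "A = (\<integral>w. Z w * c w \<partial>M)"
  have Vp': "V > 0" using Vp unfolding V_def c_def \<mu>_def .
  have vp: "v > 0" unfolding v_def using Vp' by simp
  have vV: "v^2 = V" unfolding v_def using Vp' by simp
  have iW: "integrable M W" using sq_int_integrable[OF P W] .
  have fin: "finite_measure M" using prob_space.finite_measure[OF P] .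
  have int_ab: "\<And>a b. (\<integral>w. a + b * W w \<partial>M) = a + b * \<mu>"
    using iW prob_space.prob_space[OF P] unfolding \<mu>_def
    by (simp add: finite_measure.integrable_const[OF fin])
  have pw: "\<And>a b. a = - b * \<mu> \<Longrightarrow> (\<lambda>w. a + b * W w) = (\<lambda>w. b * c w)"
    unfolding c_def by (auto simp: algebra_simps)
  define S where "S = {(a::real, b::real). (\<integral>w. a + b * W w \<partial>M) = 0 \<and> (\<integral>w. (a + b * W w)^2 \<partial>M) = 1}"
  define D where "D = (\<lambda>(a,b). \<integral>w. Z w * (a + b * W w) \<partial>M) ` S"
  define \<sigma> where "\<sigma> = (if A \<ge> 0 then 1 else (-1::real))"
  define bs where "bs = \<sigma> / v"
  have \<sigma>2: "\<sigma>^2 = 1" unfolding \<sigma>_def by simp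
  have memS: "(- bs * \<mu>, bs) \<in> S"
  proof -
    have e: "(\<lambda>w. (- bs * \<mu> + bs * W w)^2) = (\<lambda>w. (bs * c w)^2)"
      unfolding c_def by (rule ext) (simp add: algebra_simps)
    have "(\<integral>w. (- bs * \<mu> + bs * W w)^2 \<partial>M) = bs^2 * V"
      unfolding e int_scal_sq V_def ..
    also have "\<dots> = 1" unfolding bs_def
      using \<sigma>2 vV vp Vp' by (simp add: power_divide)
    finally have "(\<integral>w. (- bs * \<mu> + bs * W w)^2 \<partial>M) = 1" .
    then show ?thesis unfolding S_def using int_ab by simp
  qed
  have val: "(\<integral>w. Z w * (- bs * \<mu> + bs * W w) \<partial>M) = \<bar>A\<bar> / v"
  proof -
    have "(\<integral>w. Z w * (- bs * \<mu> + bs * W w) \<partial>M) = (\<integral>w. Z w * (bs * c w) \<partial>M)"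
      using pw[of "- bs * \<mu>" bs, OF refl] by (simp add: fun_eq_iff)
    also have "\<dots> = bs * A" unfolding int_scal A_def ..
    also have "\<dots> = \<bar>A\<bar> / v" unfolding bs_def \<sigma>_def by auto
    finally show ?thesis .
  qed
  have ub: "\<And>x. x \<in> D \<Longrightarrow> x \<le> \<bar>A\<bar> / v"
  proof -
    fix x assume "x \<in> D"
    then obtain a b where ab: "(a, b) \<in> S" and x: "x = (\<integral>w. Z w * (a + b * W w) \<partial>M)"
      unfolding D_def by auto
    have a: "a = - b * \<mu>" using ab int_ab unfolding S_def by simp
    have "1 = (\<integral>w. (a + b * W w)^2 \<partial>M)" using ab unfolding S_def by simp
    also have "\<dots> = (\<integral>w. (b * c w)^2 \<partial>M)" using pw[OF a] by (simp add: fun_eq_iff)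
    also have "\<dots> = b^2 * V" unfolding int_scal_sq V_def ..
    finally have "b^2 * V = 1" by simp
    then have bv: "\<bar>b\<bar> = 1 / v" unfolding v_def using abs_from_sq Vp' by blast
    have "x = (\<integral>w. Z w * (b * c w) \<partial>M)" unfolding x using pw[OF a] by (simp add: fun_eq_iff)
    also have "\<dots> = b * A" unfolding int_scal A_def ..
    finally have "x = b * A" .
    moreover have "b * A \<le> \<bar>b\<bar> * \<bar>A\<bar>" unfolding abs_mult[symmetric] by (rule abs_ge_self)
    ultimately show "x \<le> \<bar>A\<bar> / v" unfolding bv by simp
  qed
  have "Sup D = \<bar>A\<bar> / v"
  proof (rule cSup_eq_maximum)
    show "\<bar>A\<bar> / v \<in> D" unfolding D_def by (rule image_eqI[where x="(- bs * \<mu>, bs)"]) (use val memS in auto)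
    show "\<And>x. x \<in> D \<Longrightarrow> x \<le> \<bar>A\<bar> / v" by (rule ub)
  qed
  then show ?thesis unfolding lin_impact_def D_def S_def A_def v_def V_def c_def \<mu>_def .
qed

lemma vecX_meas:
  assumes SX: "\<forall>j\<in>{1..m}. sq_int M (X j)"
  shows "vecX m X \<in> measurable M (PiM {1..m} (\<lambda>_. borel))"
  unfolding vecX_def by (rule measurable_restrict) (use SX in \<open>auto simp: sq_int_def\<close>)

lemma sigX_subalg:
  assumes SX: "\<forall>j\<in>{1..m}. sq_int M (X j)"
  shows "subalgebra M (sigX M m X)"
proof -
  have f: "vecX m X \<in> measurable M (PiM {1..m} (\<lambda>_. borel))" by (rule vecX_meas[OF SX])
  have sp: "vecX m X \<in> space M \<rightarrow> space (PiM {1..m} (\<lambda>_. borel))" using measurable_space[OF f] by auto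
  have "sets (sigX M m X) \<subseteq> sets M"
    unfolding sigX_def sets_vimage_algebra2[OF sp] using measurable_sets[OF f] by auto
  then show ?thesis unfolding subalgebra_def sigX_def by simp
qed

lemma sigX_meas_comp:
  assumes SX: "\<forall>j\<in>{1..m}. sq_int M (X j)" and g: "g \<in> borel_measurable (PiM {1..m} (\<lambda>_. borel))"
  shows "(\<lambda>w. g (vecX m X w)) \<in> borel_measurable (sigX M m X)"
proof -
  have f: "vecX m X \<in> measurable M (PiM {1..m} (\<lambda>_. borel))" by (rule vecX_meas[OF SX])
  have sp: "vecX m X \<in> space M \<rightarrow> space (PiM {1..m} (\<lambda>_. borel))" using measurable_space[OF f] by auto
  show ?thesis unfolding sigX_def
    using measurable_comp[OF measurable_vimage_algebra1[OF sp] g] by (simp add: comp_def)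
qed

lemma sigX_meas_X:
  assumes SX: "\<forall>j\<in>{1..m}. sq_int M (X j)" and j: "j \<in> {1..m}"
  shows "X j \<in> borel_measurable (sigX M m X)"
proof -
  have "(\<lambda>w. (\<lambda>x. x j) (vecX m X w)) \<in> borel_measurable (sigX M m X)"
    by (rule sigX_meas_comp[OF SX measurable_component_singleton[OF j]])
  moreover have "(\<lambda>w. (\<lambda>x. x j) (vecX m X w)) = X j" using j unfolding vecX_def by auto
  ultimately show ?thesis by simp
qed

lemma sigX_meas_res:
  assumes SX: "\<forall>j\<in>{1..m}. sq_int M (X j)" and k: "k \<in> {1..m}"
  shows "res X (X k) c ({1..m} - {k}) \<in> borel_measurable (sigX M m X)"
proof -
  have "\<And>j. j \<in> {1..m} - {k} \<Longrightarrow> X j \<in> borel_measurable (sigX M m X)" using sigX_meas_X[OF SX] by auto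
  moreover have "X k \<in> borel_measurable (sigX M m X)" using sigX_meas_X[OF SX k] .
  ultimately show ?thesis unfolding res_def[abs_def] by measurable
qed

lemma sigX_meas_aff:
  assumes SX: "\<forall>j\<in>{1..m}. sq_int M (X j)"
  shows "aff X c {1..m} \<in> borel_measurable (sigX M m X)"
proof -
  have "\<And>j. j \<in> {1..m} \<Longrightarrow> X j \<in> borel_measurable (sigX M m X)" using sigX_meas_X[OF SX] by auto
  then show ?thesis unfolding aff_def[abs_def] by measurable
qed

lemma indep_prod:
  assumes P: "prob_space M" and SX: "\<forall>j\<in>{1..m}. sq_int M (X j)" and k: "k \<in> {1..m}"
    and I: "prob_space.indep_set M
          (sets (vimage_algebra (space M) (X k) borel))
          (sets (vimage_algebra (space M) (\<lambda>w. \<lambda>j\<in>{1..m}-{k}. X j w)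
                   (PiM ({1..m}-{k}) (\<lambda>_. borel))))"
    and j: "j \<in> {1..m} - {k}"
  shows "(\<integral>w. X k w * X j w \<partial>M) = (\<integral>w. X k w \<partial>M) * (\<integral>w. X j w \<partial>M)"
proof -
  let ?V = "\<lambda>w. \<lambda>j\<in>{1..m}-{k}. X j w"
  have mk: "X k \<in> borel_measurable M" using SX k unfolding sq_int_def by auto
  have mV: "?V \<in> measurable M (PiM ({1..m}-{k}) (\<lambda>_. borel))"
    by (rule measurable_restrict) (use SX in \<open>auto simp: sq_int_def\<close>)
  let ?A = "sets (vimage_algebra (space M) (X k) borel)"
  let ?B = "sets (vimage_algebra (space M) ?V (PiM ({1..m}-{k}) (\<lambda>_. borel)))"
  let ?C = "sigma_sets (space M) {X j -` A \<inter> space M | A. A \<in> sets borel}"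
  have mj: "X j \<in> borel_measurable M" using SX j unfolding sq_int_def by auto
  have sub: "{X j -` A \<inter> space M | A. A \<in> sets borel} \<subseteq> {?V -` S \<inter> space M | S. S \<in> sets (PiM ({1..m}-{k}) (\<lambda>_. borel))}"
  proof
    fix E assume "E \<in> {X j -` A \<inter> space M | A. A \<in> sets borel}"
    then obtain A where A: "A \<in> sets borel" and E: "E = X j -` A \<inter> space M" by auto
    let ?S = "(\<lambda>x. x j) -` A \<inter> space (PiM ({1..m}-{k}) (\<lambda>_. borel))"
    have "?S \<in> sets (PiM ({1..m}-{k}) (\<lambda>_. (borel :: real measure)))"
      using measurable_sets[OF measurable_component_singleton[OF j] A] by simp
    moreover have "E = ?V -` ?S \<inter> space M" unfolding E using j by (auto simp: space_PiM)
    ultimately show "E \<in> {?V -` S \<inter> space M | S. S \<in> sets (PiM ({1..m}-{k}) (\<lambda>_. borel))}" by blast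
  qed
  have CB: "?C \<subseteq> ?B" unfolding sets_vimage_algebra by (rule sigma_sets_subseteq[OF sub])
  have I': "prob_space.indep_sets M (case_bool ?A ?B) UNIV" using I unfolding prob_space.indep_set_def[OF P] .
  have "prob_space.indep_sets M (case_bool ?A ?C) UNIV"
    by (rule prob_space.indep_sets_mono_sets[OF P I']) (use CB in \<open>auto split: bool.split\<close>)
  then have "prob_space.indep_set M ?A ?C" unfolding prob_space.indep_set_def[OF P] .
  then have iv: "prob_space.indep_var M borel (X k) borel (X j)"
    unfolding prob_space.indep_var_eq[OF P] using mk mj unfolding sets_vimage_algebra by simp
  show ?thesis
    using prob_space.indep_var_lebesgue_integral[OF P iv] sq_int_integrable[OF P] SX k j by auto
qed

lemma split_sum:
  fixes k m :: nat
  assumes "k \<in> {1..m}" "\<forall>j\<in>{1..m} - {k}. a j = (0::real)"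
  shows "(\<Sum>j\<in>{1..m}. \<theta> j * a j) = \<theta> k * a k"
proof -
  have "(\<Sum>j\<in>{1..m}. \<theta> j * a j) = \<theta> k * a k + (\<Sum>j\<in>{1..m} - {k}. \<theta> j * a j)"
    using sum.remove[of "{1..m}" k "\<lambda>j. \<theta> j * a j"] assms(1) by simp
  also have "(\<Sum>j\<in>{1..m} - {k}. \<theta> j * a j) = 0" using assms(2) by simp
  finally show ?thesis by simp
qed

lemma Hlin_mem:
  assumes P: "prob_space M" and SX: "\<forall>j\<in>{1..m}. sq_int M (X j)" and K: "k \<in> {1..m}"
    and o1: "(\<integral>w. res X (X k) \<beta> ({1..m} - {k}) w \<partial>M) = 0"
    and o2: "\<forall>j\<in>{1..m} - {k}. (\<integral>w. X j w * res X (X k) \<beta> ({1..m} - {k}) w \<partial>M) = 0"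
    and Vp: "(\<integral>w. (res X (X k) \<beta> ({1..m} - {k}) w)^2 \<partial>M) > 0"
  shows "(\<lambda>w. (1 / sqrt (\<integral>w. (res X (X k) \<beta> ({1..m} - {k}) w)^2 \<partial>M)) * res X (X k) \<beta> ({1..m} - {k}) w)
           \<in> H_lin_set M m X k"
proof -
  define r where "r = res X (X k) \<beta> ({1..m} - {k})"
  define V where "V = (\<integral>w. (r w)^2 \<partial>M)"
  define t where "t = 1 / sqrt V"
  have Vp': "V > 0" using Vp unfolding V_def r_def .
  define \<eta> where "\<eta> = (\<lambda>j. t * (if j = 0 then - \<beta> 0 else if j = k then 1 else - \<beta> j))"
  have "(\<lambda>w. t * r w) = (\<lambda>w. \<eta> 0 + (\<Sum>j=1..m. \<eta> j * X j w))"
    using res_as_aff[OF K, of t \<beta> X] unfolding \<eta>_def r_def by simp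
  moreover have "(\<integral>w. t * r w \<partial>M) = 0" using o1 unfolding r_def by simp
  moreover have "(\<integral>w. (t * r w)^2 \<partial>M) = 1"
    unfolding int_scal_sq V_def[symmetric] t_def using Vp' by (simp add: power_divide)
  moreover have "\<forall>j\<in>{1..m}. j \<noteq> k \<longrightarrow> (\<integral>w. X j w * (t * r w) \<partial>M) = 0"
    using o2 unfolding int_scal r_def by auto
  ultimately have "(\<lambda>w. t * r w) \<in> H_lin_set M m X k" unfolding H_lin_set_def by blast
  then show ?thesis unfolding t_def V_def r_def .
qed

lemma Hlin_sub:
  assumes P: "prob_space M" and SX: "\<forall>j\<in>{1..m}. sq_int M (X j)"
  shows "H_lin_set M m X k \<subseteq> H_set M m X k"
proof
  fix d assume d: "d \<in> H_lin_set M m X k"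
  then obtain \<eta> where deq: "d = (\<lambda>w. \<eta> 0 + (\<Sum>j=1..m. \<eta> j * X j w))"
    unfolding H_lin_set_def by blast
  define g where "g = (\<lambda>x::nat \<Rightarrow> real. \<eta> 0 + (\<Sum>j=1..m. \<eta> j * x j))"
  have gm: "g \<in> borel_measurable (PiM {1..m} (\<lambda>_. borel))" unfolding g_def by measurable
  have "d = (\<lambda>w. g (vecX m X w))" unfolding deq g_def vecX_def by (rule ext) (intro arg_cong2[where f="(+)"] refl sum.cong, auto)
  moreover have "sq_int M d" unfolding deq using sq_int_aff[OF P _ , of "{1..m}" X \<eta>] SX
      unfolding aff_def[abs_def] by auto
  ultimately show "d \<in> H_set M m X k" using d gm unfolding H_set_def H_lin_set_def by blast
qed

theorem theorem3:
  fixes M :: "'a measure" and Y :: "'a \<Rightarrow> real" and X :: "nat \<Rightarrow> 'a \<Rightarrow> real"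
    and m k :: nat
  assumes P: "prob_space M"
    and SY: "sq_int M Y"
    and SX: "\<forall>j\<in>{1..m}. sq_int M (X j)"
    and K: "k \<in> {1..m}"
    and nondeg: "\<forall>\<eta> :: nat \<Rightarrow> real.
        (AE w in M. \<eta> 0 + (\<Sum>j=1..m. \<eta> j * X j w) = 0) \<longrightarrow> (\<forall>j\<in>{0..m}. \<eta> j = 0)"
  shows
    \<comment> \<open>(a)\<close>
    "(\<forall>\<beta> :: nat \<Rightarrow> real.
        (\<forall>\<beta>' :: nat \<Rightarrow> real.
           integral\<^sup>L M (\<lambda>w. (X k w - \<beta> 0 - (\<Sum>j\<in>{1..m}-{k}. \<beta> j * X j w))^2)
           \<le> integral\<^sup>L M (\<lambda>w. (X k w - \<beta>' 0 - (\<Sum>j\<in>{1..m}-{k}. \<beta>' j * X j w))^2))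
        \<longrightarrow> partial_lin_impact M m X k Y
            = lin_impact M (\<lambda>w. X k w - \<beta> 0 - (\<Sum>j\<in>{1..m}-{k}. \<beta> j * X j w)) Y)
    \<and> \<comment> \<open>(b)\<close>
     (\<forall>\<theta> :: nat \<Rightarrow> real.
        (\<forall>\<theta>' :: nat \<Rightarrow> real.
           integral\<^sup>L M (\<lambda>w. (Y w - \<theta> 0 - (\<Sum>j=1..m. \<theta> j * X j w))^2)
           \<le> integral\<^sup>L M (\<lambda>w. (Y w - \<theta>' 0 - (\<Sum>j=1..m. \<theta>' j * X j w))^2))
        \<longrightarrow> \<bar>\<theta> k\<bar> = partial_lin_impact M m X k Y / partial_lin_impact M m X k (X k))
    \<and> \<comment> \<open>(c)\<close>
     (partial_impact M m X k Y \<ge> partial_lin_impact M m X k Y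
      \<and> partial_impact M m X k (X k) = partial_lin_impact M m X k (X k))
    \<and> \<comment> \<open>(d)\<close>
     (prob_space.indep_set M
          (sets (vimage_algebra (space M) (X k) borel))
          (sets (vimage_algebra (space M) (\<lambda>w. \<lambda>j\<in>{1..m}-{k}. X j w)
                   (PiM ({1..m}-{k}) (\<lambda>_. borel))))
        \<longrightarrow> partial_lin_impact M m X k Y = lin_impact M (X k) Y)
    \<and> \<comment> \<open>(e)\<close>
     (\<forall>\<theta> :: nat \<Rightarrow> real.
        (AE w in M. real_cond_exp M (sigX M m X) Y w = \<theta> 0 + (\<Sum>j=1..m. \<theta> j * X j w))
        \<longrightarrow> partial_impact M m X k Y = partial_lin_impact M m X k Y)"
proof -
  let ?J = "{1..m} - {k}"
  have J: "finite ?J" "0 \<notin> ?J" by auto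
  have SXJ: "\<And>j. j \<in> ?J \<Longrightarrow> sq_int M (X j)" using SX by auto
  have SXa: "\<And>j. j \<in> {1..m} \<Longrightarrow> sq_int M (X j)" using SX by auto
  have SXk: "sq_int M (X k)" using SX K by auto
  obtain \<beta>0 where o1: "(\<integral>w. res X (X k) \<beta>0 ?J w \<partial>M) = 0"
      and o2: "\<forall>j\<in>?J. (\<integral>w. X j w * res X (X k) \<beta>0 ?J w \<partial>M) = 0"
    using proj_exists[where X=X, OF P J SXJ SXk] by blast
  define r where "r = res X (X k) \<beta>0 ?J"
  define V where "V = (\<integral>w. (r w)^2 \<partial>M)"
  define v where "v = sqrt V"
  have Sr: "sq_int M r" unfolding r_def by (rule sq_int_res[OF P J(1) SXJ SXk])
  have Vp: "V > 0" unfolding V_def r_def by (rule resid_pos[OF P SX K nondeg])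
  have vp: "v > 0" unfolding v_def using Vp by simp
  have vV: "V / v = v" unfolding v_def using Vp real_div_sqrt[of V] by simp
  have o1': "(\<integral>w. r w \<partial>M) = 0" using o1 unfolding r_def .
  have o2': "\<And>j. j \<in> ?J \<Longrightarrow> (\<integral>w. r w * X j w \<partial>M) = 0"
  proof -
    fix j assume j: "j \<in> ?J"
    have "(\<integral>w. r w * X j w \<partial>M) = (\<integral>w. X j w * r w \<partial>M)" by (rule int_comm)
    also have "\<dots> = 0" using o2 j unfolding r_def by blast
    finally show "(\<integral>w. r w * X j w \<partial>M) = 0" .
  qed
  have PLZ: "\<And>Z. sq_int M Z \<Longrightarrow> partial_lin_impact M m X k Z = \<bar>\<integral>w. Z w * r w \<partial>M\<bar> / v"
    unfolding r_def v_def V_def using PL[OF P SX K nondeg o1 o2] by blast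
  have rXk: "(\<integral>w. r w * X k w \<partial>M) = V"
  proof -
    have "(\<integral>w. r w * r w \<partial>M) = (\<integral>w. r w * X k w \<partial>M) - \<beta>0 0 * (\<integral>w. r w \<partial>M) - (\<Sum>j\<in>?J. \<beta>0 j * (\<integral>w. r w * X j w \<partial>M))"
      unfolding r_def[symmetric] by (subst (2) r_def) (rule int_res[OF P J(1) SXJ Sr SXk])
    then show ?thesis unfolding V_def o1' using o2' by (simp add: power2_eq_square)
  qed
  have PLXk: "partial_lin_impact M m X k (X k) = v"
    unfolding PLZ[OF SXk] int_comm[where f="X k"] rXk using Vp vV by simp
  have mem: "(\<lambda>w. (1 / v) * r w) \<in> H_lin_set M m X k"
    unfolding v_def V_def r_def by (rule Hlin_mem[OF P SX K o1 o2 Vp[unfolded V_def r_def]])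
  have sub: "H_lin_set M m X k \<subseteq> H_set M m X k" by (rule Hlin_sub[OF P SX])
  have Hsq: "\<And>d. d \<in> H_set M m X k \<Longrightarrow> sq_int M d" unfolding H_set_def by blast
  have Hbd: "\<And>d. d \<in> H_set M m X k \<Longrightarrow> \<bar>\<integral>w. r w * d w \<partial>M\<bar> \<le> v"
  proof -
    fix d assume d: "d \<in> H_set M m X k"
    have Sd: "sq_int M d" using Hsq[OF d] .
    have d2: "(\<integral>w. (d w)^2 \<partial>M) = 1" using d unfolding H_set_def by blast
    have "(\<integral>w. r w * d w \<partial>M) \<le> (V / v + v * 1) / 2"
      using amgm_int[OF Sr Sd vp] d2 unfolding V_def by simp
    moreover have "(\<integral>w. r w * (- d w) \<partial>M) \<le> (V / v + v * 1) / 2"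
      using amgm_int[OF Sr sq_int_uminus[OF Sd] vp] d2 unfolding V_def by simp
    ultimately show "\<bar>\<integral>w. r w * d w \<partial>M\<bar> \<le> v" using vV by simp
  qed
  have HXk: "\<And>d. d \<in> H_set M m X k \<Longrightarrow> (\<integral>w. d w * X k w \<partial>M) = (\<integral>w. r w * d w \<partial>M)"
  proof -
    fix d assume d: "d \<in> H_set M m X k"
    have Sd: "sq_int M d" using Hsq[OF d] .
    have d1: "(\<integral>w. d w \<partial>M) = 0" and d3: "\<forall>j\<in>{1..m}. j \<noteq> k \<longrightarrow> (\<integral>w. X j w * d w \<partial>M) = 0"
      using d unfolding H_set_def by blast+
    have "(\<integral>w. d w * r w \<partial>M) = (\<integral>w. d w * X k w \<partial>M) - \<beta>0 0 * (\<integral>w. d w \<partial>M) - (\<Sum>j\<in>?J. \<beta>0 j * (\<integral>w. d w * X j w \<partial>M))"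
      unfolding r_def by (rule int_res[OF P J(1) SXJ Sd SXk])
    moreover have "\<And>j. j \<in> ?J \<Longrightarrow> (\<integral>w. d w * X j w \<partial>M) = 0" using d3 by (auto simp: int_comm[where f=d])
    ultimately show "(\<integral>w. d w * X k w \<partial>M) = (\<integral>w. r w * d w \<partial>M)" using d1 by (simp add: int_comm[where f=d])
  qed
  have bdd: "\<And>Z. sq_int M Z \<Longrightarrow> bdd_above ((\<lambda>d. \<integral>w. Z w * d w \<partial>M) ` H_set M m X k)"
  proof -
    fix Z assume Z: "sq_int M Z"
    show "bdd_above ((\<lambda>d. \<integral>w. Z w * d w \<partial>M) ` H_set M m X k)"
    proof (rule bdd_aboveI2)
      fix d assume d: "d \<in> H_set M m X k"
      have d2: "(\<integral>w. (d w)^2 \<partial>M) = 1" using d unfolding H_set_def by blast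
      show "(\<integral>w. Z w * d w \<partial>M) \<le> ((\<integral>w. (Z w)^2 \<partial>M) / 1 + 1 * 1) / 2"
        using amgm_int[OF Z Hsq[OF d], of 1] d2 by simp
    qed
  qed
  have ne: "H_lin_set M m X k \<noteq> {}" using mem by blast
  have c1: "partial_impact M m X k Y \<ge> partial_lin_impact M m X k Y"
    unfolding partial_impact_def partial_lin_impact_def
    by (rule cSup_subset_mono) (use ne bdd[OF SY] sub in auto)
  have c2: "partial_impact M m X k (X k) = v"
    unfolding partial_impact_def
  proof (rule cSup_eq_maximum)
    have val: "(\<integral>w. X k w * ((1 / v) * r w) \<partial>M) = v"
      unfolding int_scal int_comm[where f="X k"] rXk using vV by simp
    show "v \<in> (\<lambda>d. \<integral>w. X k w * d w \<partial>M) ` H_set M m X k"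
      by (rule image_eqI[where x="\<lambda>w. (1 / v) * r w"]) (use val mem sub in auto)
    show "\<And>x. x \<in> (\<lambda>d. \<integral>w. X k w * d w \<partial>M) ` H_set M m X k \<Longrightarrow> x \<le> v"
    proof -
      fix x assume "x \<in> (\<lambda>d. \<integral>w. X k w * d w \<partial>M) ` H_set M m X k"
      then obtain d where d: "d \<in> H_set M m X k" and x: "x = (\<integral>w. X k w * d w \<partial>M)" by blast
      have "x = (\<integral>w. r w * d w \<partial>M)" unfolding x int_comm[where f="X k"] using HXk[OF d] .
      then show "x \<le> v" using Hbd[OF d] by simp
    qed
  qed
  have pa: "\<forall>\<beta> :: nat \<Rightarrow> real.
        (\<forall>\<beta>' :: nat \<Rightarrow> real.
           integral\<^sup>L M (\<lambda>w. (X k w - \<beta> 0 - (\<Sum>j\<in>{1..m}-{k}. \<beta> j * X j w))^2)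
           \<le> integral\<^sup>L M (\<lambda>w. (X k w - \<beta>' 0 - (\<Sum>j\<in>{1..m}-{k}. \<beta>' j * X j w))^2))
        \<longrightarrow> partial_lin_impact M m X k Y
            = lin_impact M (\<lambda>w. X k w - \<beta> 0 - (\<Sum>j\<in>{1..m}-{k}. \<beta> j * X j w)) Y"
  proof (intro allI impI)
    fix \<beta> :: "nat \<Rightarrow> real"
    assume hyp: "\<forall>\<beta>' :: nat \<Rightarrow> real.
           integral\<^sup>L M (\<lambda>w. (X k w - \<beta> 0 - (\<Sum>j\<in>{1..m}-{k}. \<beta> j * X j w))^2)
           \<le> integral\<^sup>L M (\<lambda>w. (X k w - \<beta>' 0 - (\<Sum>j\<in>{1..m}-{k}. \<beta>' j * X j w))^2)"
    have min: "\<forall>c'. (\<integral>w. (res X (X k) \<beta> ?J w)^2 \<partial>M) \<le> (\<integral>w. (res X (X k) c' ?J w)^2 \<partial>M)"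
      using hyp unfolding res_def .
    have ob: "(\<integral>w. res X (X k) \<beta> ?J w \<partial>M) = 0 \<and> (\<forall>j\<in>?J. (\<integral>w. X j w * res X (X k) \<beta> ?J w \<partial>M) = 0)"
      by (rule foc[where X=X, OF P J SXJ SXk min])
    have Srb: "sq_int M (res X (X k) \<beta> ?J)" by (rule sq_int_res[OF P J(1) SXJ SXk])
    have eq: "(\<lambda>w. X k w - \<beta> 0 - (\<Sum>j\<in>?J. \<beta> j * X j w)) = res X (X k) \<beta> ?J"
      by (simp add: res_def[abs_def])
    have Vb: "(\<integral>w. (res X (X k) \<beta> ?J w)^2 \<partial>M) > 0" by (rule resid_pos[OF P SX K nondeg])
    have "lin_impact M (res X (X k) \<beta> ?J) Y = \<bar>\<integral>w. Y w * (res X (X k) \<beta> ?J w - (\<integral>w. res X (X k) \<beta> ?J w \<partial>M)) \<partial>M\<bar>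
            / sqrt (\<integral>w. (res X (X k) \<beta> ?J w - (\<integral>w. res X (X k) \<beta> ?J w \<partial>M))^2 \<partial>M)"
      by (rule LI[OF P Srb SY]) (use ob Vb in simp)
    then show "partial_lin_impact M m X k Y = lin_impact M (\<lambda>w. X k w - \<beta> 0 - (\<Sum>j\<in>?J. \<beta> j * X j w)) Y"
      unfolding eq using PL[OF P SX K nondeg conjunct1[OF ob] conjunct2[OF ob] SY] ob by simp
  qed
  have pb: "\<forall>\<theta> :: nat \<Rightarrow> real.
        (\<forall>\<theta>' :: nat \<Rightarrow> real.
           integral\<^sup>L M (\<lambda>w. (Y w - \<theta> 0 - (\<Sum>j=1..m. \<theta> j * X j w))^2)
           \<le> integral\<^sup>L M (\<lambda>w. (Y w - \<theta>' 0 - (\<Sum>j=1..m. \<theta>' j * X j w))^2))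
        \<longrightarrow> \<bar>\<theta> k\<bar> = partial_lin_impact M m X k Y / partial_lin_impact M m X k (X k)"
  proof (intro allI impI)
    fix \<theta> :: "nat \<Rightarrow> real"
    assume hyp: "\<forall>\<theta>' :: nat \<Rightarrow> real.
           integral\<^sup>L M (\<lambda>w. (Y w - \<theta> 0 - (\<Sum>j=1..m. \<theta> j * X j w))^2)
           \<le> integral\<^sup>L M (\<lambda>w. (Y w - \<theta>' 0 - (\<Sum>j=1..m. \<theta>' j * X j w))^2)"
    have min: "\<forall>c'. (\<integral>w. (res X Y \<theta> {1..m} w)^2 \<partial>M) \<le> (\<integral>w. (res X Y c' {1..m} w)^2 \<partial>M)"
      using hyp unfolding res_def .
    have fin: "finite {1..m}" "0 \<notin> {1..m}" by auto
    have ob: "(\<integral>w. res X Y \<theta> {1..m} w \<partial>M) = 0 \<and> (\<forall>j\<in>{1..m}. (\<integral>w. X j w * res X Y \<theta> {1..m} w \<partial>M) = 0)"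
      by (rule foc[where X=X, OF P fin SXa SY min])
    define e where "e = res X Y \<theta> {1..m}"
    have Se: "sq_int M e" unfolding e_def by (rule sq_int_res[OF P fin(1) SXa SY])
    have e1: "(\<integral>w. e w \<partial>M) = 0" using ob unfolding e_def by blast
    have e2: "\<And>j. j \<in> {1..m} \<Longrightarrow> (\<integral>w. e w * X j w \<partial>M) = 0"
      using ob unfolding e_def by (auto intro: int_comm0)
    have er: "(\<integral>w. e w * r w \<partial>M) = 0"
    proof -
      have "(\<integral>w. e w * r w \<partial>M) = (\<integral>w. e w * X k w \<partial>M) - \<beta>0 0 * (\<integral>w. e w \<partial>M) - (\<Sum>j\<in>?J. \<beta>0 j * (\<integral>w. e w * X j w \<partial>M))"
        unfolding r_def by (rule int_res[OF P J(1) SXJ Se SXk])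
      then show ?thesis using e1 e2 K by simp
    qed
    have re: "(\<integral>w. r w * e w \<partial>M) = (\<integral>w. r w * Y w \<partial>M) - \<theta> 0 * (\<integral>w. r w \<partial>M) - (\<Sum>j\<in>{1..m}. \<theta> j * (\<integral>w. r w * X j w \<partial>M))"
      unfolding e_def by (rule int_res[OF P fin(1) SXa Sr SY])
    have ss: "(\<Sum>j\<in>{1..m}. \<theta> j * (\<integral>w. r w * X j w \<partial>M)) = \<theta> k * V"
      using split_sum[OF K, of "\<lambda>j. (\<integral>w. r w * X j w \<partial>M)" \<theta>] o2' rXk by simp
    have rY: "(\<integral>w. Y w * r w \<partial>M) = \<theta> k * V"
      using re er ss o1' by (simp add: int_comm[where f=r])
    have "partial_lin_impact M m X k Y = \<bar>\<theta> k\<bar> * V / v"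
      unfolding PLZ[OF SY] rY abs_mult using Vp by simp
    also have "\<dots> = \<bar>\<theta> k\<bar> * (V / v)" by simp
    also have "\<dots> = \<bar>\<theta> k\<bar> * v" unfolding vV ..
    finally have "partial_lin_impact M m X k Y = \<bar>\<theta> k\<bar> * v" .
    then show "\<bar>\<theta> k\<bar> = partial_lin_impact M m X k Y / partial_lin_impact M m X k (X k)"
      unfolding PLXk using vp by simp
  qed
  have pd: "prob_space.indep_set M
          (sets (vimage_algebra (space M) (X k) borel))
          (sets (vimage_algebra (space M) (\<lambda>w. \<lambda>j\<in>{1..m}-{k}. X j w)
                   (PiM ({1..m}-{k}) (\<lambda>_. borel))))
        \<longrightarrow> partial_lin_impact M m X k Y = lin_impact M (X k) Y"
  proof
    assume I: "prob_space.indep_set M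
          (sets (vimage_algebra (space M) (X k) borel))
          (sets (vimage_algebra (space M) (\<lambda>w. \<lambda>j\<in>{1..m}-{k}. X j w)
                   (PiM ({1..m}-{k}) (\<lambda>_. borel))))"
    define \<mu> where "\<mu> = (\<integral>w. X k w \<partial>M)"
    define \<beta>' where "\<beta>' = (\<lambda>i::nat. if i = 0 then \<mu> else 0)"
    have s0: "\<And>w. (\<Sum>j\<in>?J. \<beta>' j * X j w) = 0" by (rule sum.neutral) (auto simp: \<beta>'_def)
    have rb: "res X (X k) \<beta>' ?J = (\<lambda>w. X k w - \<mu>)"
      by (rule ext) (simp add: res_def s0, simp add: \<beta>'_def)
    have iXk: "integrable M (X k)" using sq_int_integrable[OF P SXk] .
    have ob1: "(\<integral>w. res X (X k) \<beta>' ?J w \<partial>M) = 0"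
      unfolding rb using iXk prob_space.prob_space[OF P] unfolding \<mu>_def
      by (simp add: finite_measure.integrable_const[OF prob_space.finite_measure[OF P]])
    have ob2: "\<forall>j\<in>?J. (\<integral>w. X j w * res X (X k) \<beta>' ?J w \<partial>M) = 0"
    proof
      fix j assume j: "j \<in> ?J"
      have "(\<integral>w. X j w * (X k w - \<mu> * 1) \<partial>M) = (\<integral>w. X j w * X k w \<partial>M) - \<mu> * (\<integral>w. X j w * 1 \<partial>M)"
        by (rule int_lin2[OF SXJ[OF j] SXk sq_int_const[OF P]])
      also have "(\<integral>w. X j w * X k w \<partial>M) = (\<integral>w. X k w * X j w \<partial>M)" by (rule int_comm)
      also have "\<dots> = \<mu> * (\<integral>w. X j w \<partial>M)" unfolding \<mu>_def by (rule indep_prod[OF P SX K I j])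
      finally show "(\<integral>w. X j w * res X (X k) \<beta>' ?J w \<partial>M) = 0" unfolding rb by simp
    qed
    have Vb: "(\<integral>w. (res X (X k) \<beta>' ?J w)^2 \<partial>M) > 0" by (rule resid_pos[OF P SX K nondeg])
    have "lin_impact M (X k) Y = \<bar>\<integral>w. Y w * (X k w - \<mu>) \<partial>M\<bar> / sqrt (\<integral>w. (X k w - \<mu>)^2 \<partial>M)"
      unfolding \<mu>_def by (rule LI[OF P SXk SY]) (use Vb[unfolded rb \<mu>_def] in simp)
    then show "partial_lin_impact M m X k Y = lin_impact M (X k) Y"
      using PL[OF P SX K nondeg ob1 ob2 SY] unfolding rb by simp
  qed
  have pe: "\<forall>\<theta> :: nat \<Rightarrow> real.
        (AE w in M. real_cond_exp M (sigX M m X) Y w = \<theta> 0 + (\<Sum>j=1..m. \<theta> j * X j w))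
        \<longrightarrow> partial_impact M m X k Y = partial_lin_impact M m X k Y"
  proof (intro allI impI)
    fix \<theta> :: "nat \<Rightarrow> real"
    assume ae: "AE w in M. real_cond_exp M (sigX M m X) Y w = \<theta> 0 + (\<Sum>j=1..m. \<theta> j * X j w)"
    let ?F = "sigX M m X"
    have subalg: "subalgebra M ?F" by (rule sigX_subalg[OF SX])
    have fin: "finite_measure M" by (rule prob_space.finite_measure[OF P])
    have "finite_measure_subalgebra M ?F"
      unfolding finite_measure_subalgebra_def finite_measure_subalgebra_axioms_def using fin subalg by simp
    then have sfs: "sigma_finite_subalgebra M ?F" by (rule finite_measure_subalgebra_is_sigma_finite)
    define L where "L = aff X \<theta> {1..m}"
    have fin1: "finite {1..m}" by simp
    have SL: "sq_int M L" unfolding L_def by (rule sq_int_aff[OF P fin1 SXa])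
    have ae': "AE w in M. real_cond_exp M ?F Y w = L w" using ae unfolding L_def aff_def .
    have YM: "Y \<in> borel_measurable M" using SY unfolding sq_int_def by simp
    have CE: "\<And>f. f \<in> borel_measurable ?F \<Longrightarrow> sq_int M f \<Longrightarrow> (\<integral>w. f w * Y w \<partial>M) = (\<integral>w. f w * L w \<partial>M)"
    proof -
      fix f assume fF: "f \<in> borel_measurable ?F" and Sf: "sq_int M f"
      have fM: "f \<in> borel_measurable M" using Sf unfolding sq_int_def by simp
      have "(\<integral>w. f w * real_cond_exp M ?F Y w \<partial>M) = (\<integral>w. f w * Y w \<partial>M)"
        by (rule sigma_finite_subalgebra.real_cond_exp_intg(2)[OF sfs sq_int_integrable_prod[OF Sf SY] fF YM])
      moreover have "(\<integral>w. f w * real_cond_exp M ?F Y w \<partial>M) = (\<integral>w. f w * L w \<partial>M)"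
      proof (rule integral_cong_AE)
        show "(\<lambda>w. f w * real_cond_exp M ?F Y w) \<in> borel_measurable M"
          using fM borel_measurable_cond_exp2[of M ?F Y] by measurable
        show "(\<lambda>w. f w * L w) \<in> borel_measurable M" using fM SL[unfolded sq_int_def, THEN conjunct1] by measurable
        show "AE w in M. f w * real_cond_exp M ?F Y w = f w * L w" using ae' by auto
      qed
      ultimately show "(\<integral>w. f w * Y w \<partial>M) = (\<integral>w. f w * L w \<partial>M)" by simp
    qed
    have FL: "\<And>f. sq_int M f \<Longrightarrow> (\<integral>w. f w * L w \<partial>M) = \<theta> 0 * (\<integral>w. f w \<partial>M) + (\<Sum>j\<in>{1..m}. \<theta> j * (\<integral>w. f w * X j w \<partial>M))"
      unfolding L_def by (rule int_aff[OF P fin1 SXa])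
    have rF: "r \<in> borel_measurable ?F" unfolding r_def by (rule sigX_meas_res[OF SX K])
    have rY: "(\<integral>w. r w * Y w \<partial>M) = \<theta> k * V"
    proof -
      have "(\<integral>w. r w * Y w \<partial>M) = \<theta> 0 * (\<integral>w. r w \<partial>M) + (\<Sum>j\<in>{1..m}. \<theta> j * (\<integral>w. r w * X j w \<partial>M))"
        using CE[OF rF Sr] FL[OF Sr] by simp
      also have "(\<Sum>j\<in>{1..m}. \<theta> j * (\<integral>w. r w * X j w \<partial>M)) = \<theta> k * V"
        using split_sum[OF K, of "\<lambda>j. (\<integral>w. r w * X j w \<partial>M)" \<theta>] o2' rXk by simp
      finally show ?thesis using o1' by simp
    qed
    have PLY: "partial_lin_impact M m X k Y = \<bar>\<theta> k\<bar> * v"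
    proof -
      have "partial_lin_impact M m X k Y = \<bar>\<theta> k\<bar> * V / v"
        unfolding PLZ[OF SY] int_comm[where f=Y] rY abs_mult using Vp by simp
      also have "\<dots> = \<bar>\<theta> k\<bar> * (V / v)" by simp
      also have "\<dots> = \<bar>\<theta> k\<bar> * v" unfolding vV ..
      finally show ?thesis .
    qed
    have ubH: "\<And>d. d \<in> H_set M m X k \<Longrightarrow> (\<integral>w. Y w * d w \<partial>M) \<le> \<bar>\<theta> k\<bar> * v"
    proof -
      fix d assume d: "d \<in> H_set M m X k"
      have Sd: "sq_int M d" using Hsq[OF d] .
      obtain g where g: "g \<in> borel_measurable (PiM {1..m} (\<lambda>_. borel))" and deq: "d = (\<lambda>w. g (vecX m X w))"
        using d unfolding H_set_def by blast
      have dF: "d \<in> borel_measurable ?F" unfolding deq by (rule sigX_meas_comp[OF SX g])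
      have d1: "(\<integral>w. d w \<partial>M) = 0" and d3: "\<forall>j\<in>{1..m}. j \<noteq> k \<longrightarrow> (\<integral>w. X j w * d w \<partial>M) = 0"
        using d unfolding H_set_def by blast+
      have d3': "\<forall>j\<in>{1..m} - {k}. (\<integral>w. d w * X j w \<partial>M) = 0"
        using d3 by (auto intro: int_comm0)
      have "(\<integral>w. Y w * d w \<partial>M) = (\<integral>w. d w * Y w \<partial>M)" by (rule int_comm)
      also have "\<dots> = \<theta> 0 * (\<integral>w. d w \<partial>M) + (\<Sum>j\<in>{1..m}. \<theta> j * (\<integral>w. d w * X j w \<partial>M))"
        using CE[OF dF Sd] FL[OF Sd] by simp
      also have "\<dots> = \<theta> k * (\<integral>w. d w * X k w \<partial>M)"
        using split_sum[OF K d3', of \<theta>] d1 by simp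
      also have "\<dots> = \<theta> k * (\<integral>w. r w * d w \<partial>M)" unfolding HXk[OF d] ..
      also have "\<dots> \<le> \<bar>\<theta> k\<bar> * \<bar>\<integral>w. r w * d w \<partial>M\<bar>" unfolding abs_mult[symmetric] by (rule abs_ge_self)
      also have "\<dots> \<le> \<bar>\<theta> k\<bar> * v" using Hbd[OF d] by (simp add: mult_left_mono)
      finally show "(\<integral>w. Y w * d w \<partial>M) \<le> \<bar>\<theta> k\<bar> * v" .
    qed
    have "partial_impact M m X k Y \<le> \<bar>\<theta> k\<bar> * v"
      unfolding partial_impact_def
      by (rule cSup_least) (use ne sub ubH in auto)
    then show "partial_impact M m X k Y = partial_lin_impact M m X k Y"
      using c1 PLY by simp
  qed
  show ?thesis using pa pb c1 c2 PLXk pd pe by simp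
qed

end
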